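(* Let $m\ge3$ and let $\mathscr{P}$ be a symmetric transition probability tensor of order $m$ and dimension $2$. Then $\mathscr{P}$ has a unique positive stationary probability vector (i.e., one with both entries strictly positive), and it equals $(\tfrac12,\tfrac12)^\top$.
   Context: $\mathscr{P}=(p_{i_1\cdots i_m})$ is a tensor of order $m$ and dimension $2$ with real entries indexed by $i_1,\dots,i_m\in\{1,2\}$. It is symmetric if its entries are invariant under every permutation of indices. It is a transition probability tensor if $0\le p_{i_1\cdots i_m}\le1$ and $\sum_{i_1=1}^2p_{i_1i_2\cdots i_m}=1$ for all $i_2,\dots,i_m$. A stationary probability vector of $\mathscr{P}$ is a vector $z=(z_1,z_2)^\top$ with $z_1,z_2\ge0$ and $z_1+z_2=1$ such that $$\sum_{i_2,\dots,i_m=1}^2p_{ii_2\cdots i_m}z_{i_2}\cdots z_{i_m}=z_i\quad\text{for } i=1,2.$$ *)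

theory Defs
  imports Complex_Main "HOL-Library.Multiset"
begin

text \<open>A tensor of order m and dimension 2 is a function on index lists
  (i_1,...,i_m) of length m with entries in {1,2}; values on other lists are irrelevant.\<close>

definition idx :: "nat \<Rightarrow> nat list set" where
  "idx k = {xs. length xs = k \<and> set xs \<subseteq> {1,2}}"

definition symmetric_tensor :: "nat \<Rightarrow> (nat list \<Rightarrow> real) \<Rightarrow> bool" where
  "symmetric_tensor m P \<longleftrightarrow>
     (\<forall>xs\<in>idx m. \<forall>ys\<in>idx m. mset xs = mset ys \<longrightarrow> P xs = P ys)"

definition transition_tensor :: "nat \<Rightarrow> (nat list \<Rightarrow> real) \<Rightarrow> bool" where
  "transition_tensor m P \<longleftrightarrow>
     (\<forall>xs\<in>idx m. 0 \<le> P xs \<and> P xs \<le> 1) \<and>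
     (\<forall>t\<in>idx (m - 1). (\<Sum>i\<in>{1,2::nat}. P (i # t)) = 1)"

definition stationary :: "nat \<Rightarrow> (nat list \<Rightarrow> real) \<Rightarrow> real \<Rightarrow> real \<Rightarrow> bool" where
  "stationary m P z1 z2 \<longleftrightarrow>
     (let z = (\<lambda>i::nat. if i = 1 then z1 else z2) in
      z1 \<ge> 0 \<and> z2 \<ge> 0 \<and> z1 + z2 = 1 \<and>
      (\<forall>i\<in>{1,2}. (\<Sum>t\<in>idx (m - 1). P (i # t) * (\<Prod>j<length t. z (t ! j))) = z i))"

end

theory Submission
  imports Defs
begin

lemma prod_nth_list: "(\<Prod>j<length t. g (t ! j)) = prod_list (map g (t::nat list)) " for g :: "nat \<Rightarrow> real"
  by (induction t) (simp_all add: prod.lessThan_Suc_shift del: prod.lessThan_Suc)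

lemma idx_Suc: "idx (Suc n) = (\<lambda>(i,t). i # t) ` ({1,2} \<times> idx n)"
  unfolding idx_def
  by (auto simp: length_Suc_conv image_iff)

lemma idx_finite: "finite (idx n)"
proof (induction n)
  case 0 then show ?case by (simp add: idx_def)
next
  case (Suc n) then show ?case by (simp add: idx_Suc)
qed

lemma sum_idx: "(\<Sum>t\<in>idx n. prod_list (map g t)) = (g 1 + g 2) ^ n" for g :: "nat \<Rightarrow> real"
proof (induction n)
  case 0
  have "idx 0 = {[]}" by (auto simp: idx_def)
  then show ?case by simp
next
  case (Suc n)
  have inj: "inj_on (\<lambda>(i,t). i # t) ({1,2} \<times> idx n)" by (auto simp: inj_on_def)
  have "(\<Sum>t\<in>idx (Suc n). prod_list (map g t)) = (\<Sum>(i,t)\<in>{1,2} \<times> idx n. g i * prod_list (map g t))"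
    unfolding idx_Suc by (subst sum.reindex[OF inj]) (simp add: case_prod_unfold)
  also have "\<dots> = (\<Sum>i\<in>{1,2::nat}. \<Sum>t\<in>idx n. g i * prod_list (map g t))"
    by (rule sum.cartesian_product[symmetric])
  also have "\<dots> = (g 1 + g 2) * (g 1 + g 2) ^ n"
    by (simp add: sum_distrib_left[symmetric] Suc distrib_right)
  finally show ?case by simp
qed

definition sg :: "nat \<Rightarrow> real" where "sg i = (if i = 1 then -1 else 1)"

lemma prod_sg_mset: "mset xs = mset ys \<Longrightarrow> prod_list (map sg xs) = prod_list (map sg ys)"
  by (metis mset_map prod_mset_prod_list)

lemma tensor_form:
  assumes sym: "symmetric_tensor m P" and tr: "transition_tensor m P" and m: "m \<ge> 1"
  shows "\<forall>xs\<in>idx m. count (mset xs) 1 = j \<longrightarrow>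
           P xs = 1/2 + (P (replicate m 2) - 1/2) * prod_list (map sg xs)"
proof (induction j)
  case 0
  show ?case
  proof (intro ballI impI)
    fix xs assume xs: "xs \<in> idx m" "count (mset xs) 1 = 0"
    have "xs = replicate m 2"
      using xs by (auto simp: idx_def count_eq_zero_iff intro!: replicate_eqI)
    moreover have "prod_list (map sg (replicate m 2)) = 1" by (simp add: sg_def)
    ultimately show "P xs = 1/2 + (P (replicate m 2) - 1/2) * prod_list (map sg xs)" by simp
  qed
next
  case (Suc j)
  show ?case
  proof (intro ballI impI)
    fix xs assume xs: "xs \<in> idx m" "count (mset xs) 1 = Suc j"
    have in1: "1 \<in> set xs" using xs(2) by (metis count_mset_0_iff nat.simps(3))
    define t where "t = remove1 1 xs"
    have mt: "mset (1 # t) = mset xs" using in1 by (simp add: t_def)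
    have lt: "length t = m - 1" using xs in1 by (simp add: t_def length_remove1 idx_def)
    have st: "set t \<subseteq> {1,2}" using xs(1) set_remove1_subset[of 1 xs] unfolding t_def idx_def by blast
    have tidx: "t \<in> idx (m - 1)" using lt st by (simp add: idx_def)
    have 1: "1 # t \<in> idx m" "2 # t \<in> idx m" using lt st m by (auto simp: idx_def)
    have Pxs: "P xs = P (1 # t)"
      by (rule sym[unfolded symmetric_tensor_def, rule_format, OF xs(1) 1(1) mt[symmetric]])
    have sum1: "P (1 # t) + P (2 # t) = 1"
      using tr[unfolded transition_tensor_def, THEN conjunct2, rule_format, OF tidx] by simp
    have "count (mset (1 # t)) 1 = Suc j" using mt xs(2) by simp
    hence ct: "count (mset t) 1 = j" by simp
    have c2: "count (mset (2 # t)) 1 = j" using ct by simp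
    have P2: "P (2 # t) = 1/2 + (P (replicate m 2) - 1/2) * prod_list (map sg (2 # t))"
      using Suc 1 c2 by blast
    have s: "prod_list (map sg xs) = - prod_list (map sg (2 # t))"
      using prod_sg_mset[OF mt] by (simp add: sg_def)
    show "P xs = 1/2 + (P (replicate m 2) - 1/2) * prod_list (map sg xs)"
      using Pxs sum1 P2 s by (simp add: algebra_simps)
  qed
qed

theorem corollary2p1:
  fixes m :: nat and P :: "nat list \<Rightarrow> real"
  assumes "m \<ge> 3"
    and "symmetric_tensor m P"
    and "transition_tensor m P"
  shows "{(z1, z2). z1 > 0 \<and> z2 > 0 \<and> stationary m P z1 z2} = {(1/2, 1/2)}"
proof -
  define c where "c = P (replicate m 2)"
  define n where "n = m - 1"
  have n2: "n \<ge> 2" using assms(1) by (simp add: n_def)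
  have rep: "replicate m 2 \<in> idx m" by (auto simp: idx_def)
  have c01: "0 \<le> c" "c \<le> 1" using assms(3) rep by (auto simp: transition_tensor_def c_def)
  have form: "\<And>xs. xs \<in> idx m \<Longrightarrow> P xs = 1/2 + (c - 1/2) * prod_list (map sg xs)"
    using tensor_form[OF assms(2,3)] assms(1) unfolding c_def by fastforce
  have P1: "P (1 # t) = 1/2 - (c - 1/2) * prod_list (map sg t)" if "t \<in> idx n" for t
    using form[of "1 # t"] that assms(1) by (simp add: idx_def n_def sg_def)
  have P2: "P (2 # t) = 1/2 + (c - 1/2) * prod_list (map sg t)" if "t \<in> idx n" for t
    using form[of "2 # t"] that assms(1) by (simp add: idx_def n_def sg_def)
  have S: "(\<Sum>t\<in>idx n. P (i # t) * prod_list (map z t)) =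
             1/2 * (z 1 + z 2)^n + (if i = 1 then -1 else 1) * (c - 1/2) * (z 2 - z 1)^n"
    if "i \<in> {1,2}" for i and z :: "nat \<Rightarrow> real"
  proof -
    have e: "prod_list (map sg t) * prod_list (map z t) = prod_list (map (\<lambda>x. sg x * z x) t)" for t
      by (induction t) (simp_all add: algebra_simps)
    have A: "(\<Sum>t\<in>idx n. prod_list (map sg t) * prod_list (map z t)) = (z 2 - z 1)^n"
      unfolding e sum_idx by (simp add: sg_def)
    have B: "(\<Sum>t\<in>idx n. prod_list (map z t)) = (z 1 + z 2)^n" by (rule sum_idx)
    show ?thesis
    proof (cases "i = 1")
      case True
      have "(\<Sum>t\<in>idx n. P (i # t) * prod_list (map z t)) =
          (\<Sum>t\<in>idx n. 1/2 * prod_list (map z t) - (c - 1/2) * (prod_list (map sg t) * prod_list (map z t)))"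
        unfolding True by (intro sum.cong refl) (subst P1, assumption, simp add: algebra_simps)
      also have "\<dots> = 1/2 * (z 1 + z 2)^n - (c - 1/2) * (z 2 - z 1)^n"
        by (simp only: sum_subtractf sum_distrib_left[symmetric] A B)
      finally show ?thesis using True by (simp add: algebra_simps)
    next
      case False
      hence i2: "i = 2" using that by auto
      have "(\<Sum>t\<in>idx n. P (i # t) * prod_list (map z t)) =
          (\<Sum>t\<in>idx n. 1/2 * prod_list (map z t) + (c - 1/2) * (prod_list (map sg t) * prod_list (map z t)))"
        unfolding i2 by (intro sum.cong refl) (subst P2, assumption, simp add: algebra_simps)
      also have "\<dots> = 1/2 * (z 1 + z 2)^n + (c - 1/2) * (z 2 - z 1)^n"
        by (simp only: sum.distrib sum_distrib_left[symmetric] A B)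
      finally show ?thesis using False by simp
    qed
  qed
  have stat: "stationary m P z1 z2 \<longleftrightarrow> z1 \<ge> 0 \<and> z2 \<ge> 0 \<and> z1 + z2 = 1 \<and>
      1/2 * (z1 + z2)^n - (c - 1/2) * (z2 - z1)^n = z1 \<and> 1/2 * (z1 + z2)^n + (c - 1/2) * (z2 - z1)^n = z2" for z1 z2
  proof -
    define z where "z = (\<lambda>i::nat. if i = 1 then z1 else z2)"
    have s1: "(\<Sum>t\<in>idx (m-1). P (1 # t) * (\<Prod>j<length t. z (t ! j))) =
          1/2 * (z1 + z2)^n - (c - 1/2) * (z2 - z1)^n"
      using S[of 1 z] unfolding prod_nth_list n_def by (simp add: z_def algebra_simps)
    have s2: "(\<Sum>t\<in>idx (m-1). P (2 # t) * (\<Prod>j<length t. z (t ! j))) =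
          1/2 * (z1 + z2)^n + (c - 1/2) * (z2 - z1)^n"
      using S[of 2 z] unfolding prod_nth_list n_def by (simp add: z_def)
    have "stationary m P z1 z2 \<longleftrightarrow> z1 \<ge> 0 \<and> z2 \<ge> 0 \<and> z1 + z2 = 1 \<and>
       (\<Sum>t\<in>idx (m-1). P (1 # t) * (\<Prod>j<length t. z (t ! j))) = z 1 \<and>
       (\<Sum>t\<in>idx (m-1). P (2 # t) * (\<Prod>j<length t. z (t ! j))) = z 2"
      unfolding stationary_def Let_def z_def[symmetric] by simp
    then show ?thesis unfolding s1 s2 by (simp add: z_def)
  qed
  show ?thesis
  proof (rule set_eqI, rule iffI)
    fix p assume "p \<in> {(z1, z2). z1 > 0 \<and> z2 > 0 \<and> stationary m P z1 z2}"
    then obtain z1 z2 where p: "p = (z1, z2)" and h: "z1 > 0" "z2 > 0" "stationary m P z1 z2" by blast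
    define d where "d = z2 - z1"
    have eqs0: "z1 + z2 = 1" "1/2 * (z1 + z2)^n - (c - 1/2) * d^n = z1" using h(3) stat unfolding d_def by blast+
    have eqs: "z1 + z2 = 1" "1/2 - (c - 1/2) * d^n = z1" using eqs0 by simp_all
    have dd: "(1 - 2*c) * d^n = - d" using eqs unfolding d_def by (simp add: algebra_simps)
    have ad: "\<bar>d\<bar> < 1" using h eqs unfolding d_def by auto
    have d0: "d = 0"
    proof (rule ccontr)
      assume "d \<noteq> 0"
      hence pos: "\<bar>d\<bar> > 0" by simp
      have "\<bar>d\<bar> = \<bar>1 - 2*c\<bar> * \<bar>d\<bar>^n" using dd by (metis abs_minus_cancel abs_mult power_abs)
      also have "\<dots> \<le> \<bar>d\<bar>^n" using c01 by (intro mult_left_le_one_le) auto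
      also have "\<dots> \<le> \<bar>d\<bar>^2" using n2 ad by (intro power_decreasing) auto
      also have "\<dots> < \<bar>d\<bar>" using mult_strict_right_mono[OF ad pos] by (simp add: power2_eq_square)
      finally show False by simp
    qed
    have "z1 = 1/2" "z2 = 1/2" using d0 eqs(1) unfolding d_def by linarith+
    then show "p \<in> {(1/2, 1/2)}" using p by simp
  next
    fix p assume p: "p \<in> {(1/2::real, 1/2::real)}"
    have "(0::real)^n = 0" using n2 by simp
    then have "stationary m P (1/2) (1/2)" unfolding stat by simp
    then show "p \<in> {(z1, z2). z1 > 0 \<and> z2 > 0 \<and> stationary m P z1 z2}" using p by simp
  qed
qed

end
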